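(* For all $n\ge1$, the number of permutations in $\mathcal{S}_n$ avoiding each of $1243$, $2143$ and $321$ equals $n+2\binom{n}{3}$.
   Context: A permutation $\pi\in\mathcal{S}_n$ avoids $\tau\in\mathcal{S}_k$ if there are no indices $i_1<\dots<i_k$ with $\pi_{i_1}\cdots\pi_{i_k}$ in the same relative order as $\tau_1\cdots\tau_k$. *)

theory Defs
  imports "HOL-Combinatorics.Permutations"
begin

text \<open>A permutation of [n] = {1..n} is a bijection p with p permutes {1..n}; its one-line
  notation is p 1, ..., p n. A pattern tau in S_k is given by its one-line notation as a list
  (values 1..k).\<close>

definition perms :: "nat \<Rightarrow> (nat \<Rightarrow> nat) set" where
  "perms n = {p. p permutes {1..n}}"

definition contains :: "nat \<Rightarrow> (nat \<Rightarrow> nat) \<Rightarrow> nat list \<Rightarrow> bool" where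
  "contains n p tau \<longleftrightarrow>
     (\<exists>i :: nat \<Rightarrow> nat.
        (\<forall>a<length tau. i a \<in> {1..n}) \<and>
        (\<forall>a b. a < b \<and> b < length tau \<longrightarrow> i a < i b) \<and>
        (\<forall>a<length tau. \<forall>b<length tau. p (i a) < p (i b) \<longleftrightarrow> tau ! a < tau ! b))"

definition avoids :: "nat \<Rightarrow> (nat \<Rightarrow> nat) \<Rightarrow> nat list \<Rightarrow> bool" where
  "avoids n p tau \<longleftrightarrow> \<not> contains n p tau"

end

theory Submission
  imports Defs
begin


lemma c321: "contains n p [3,2,1] \<longleftrightarrow> (\<exists>a b c. 1\<le>a \<and> a<b \<and> b<c \<and> c\<le>n \<and> p c < p b \<and> p b < p a)"
proof
  assume "contains n p [3,2,1]"
  then obtain i where h1: "\<forall>a<length [3,2,1::nat]. i a \<in> {1..n}" and h2: "\<forall>a b. a < b \<and> b < length [3,2,1::nat] \<longrightarrow> i a < i b"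
    and h3: "\<forall>a<length [3,2,1::nat]. \<forall>b<length [3,2,1::nat]. p (i a) < p (i b) \<longleftrightarrow> [3,2,1::nat] ! a < [3,2,1] ! b"
    unfolding contains_def by blast
  have "1 \<le> i 0" "i 0 < i 1" "i 1 < i 2" "i 2 \<le> n" using h1[rule_format, of 0] h1[rule_format, of 2]
     h2[rule_format, of 0 1] h2[rule_format, of 1 2] by auto
  moreover have "p (i 2) < p (i 1)" "p (i 1) < p (i 0)" using h3[rule_format, of 2 1] h3[rule_format, of 1 0] by auto
  ultimately show "\<exists>a b c. 1\<le>a \<and> a<b \<and> b<c \<and> c\<le>n \<and> p c < p b \<and> p b < p a" by blast
next
  assume "\<exists>a b c. 1\<le>a \<and> a<b \<and> b<c \<and> c\<le>n \<and> p c < p b \<and> p b < p a"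
  then obtain a b c where h: "1\<le>a" "a<b" "b<c" "c\<le>n" "p c < p b" "p b < p a" by blast
  let ?i = "\<lambda>t. [a,b,c] ! t"
  have "(\<forall>t<length [3,2,1::nat]. ?i t \<in> {1..n}) \<and>
        (\<forall>s t. s < t \<and> t < length [3,2,1::nat] \<longrightarrow> ?i s < ?i t) \<and>
        (\<forall>s<length [3,2,1::nat]. \<forall>t<length [3,2,1::nat]. p (?i s) < p (?i t) \<longleftrightarrow> [3,2,1::nat] ! s < [3,2,1] ! t)"
    using h by (auto simp: less_Suc_eq numeral_eq_Suc)
  then show "contains n p [3,2,1]" unfolding contains_def by blast
qed

lemma c1243: "contains n p [1,2,4,3] \<longleftrightarrow> (\<exists>a b c d. 1\<le>a \<and> a<b \<and> b<c \<and> c<d \<and> d\<le>n \<and> p a < p b \<and> p b < p d \<and> p d < p c)"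
proof
  assume "contains n p [1,2,4,3]"
  then obtain i where h1: "\<forall>a<length [1,2,4,3::nat]. i a \<in> {1..n}" and h2: "\<forall>a b. a < b \<and> b < length [1,2,4,3::nat] \<longrightarrow> i a < i b"
    and h3: "\<forall>a<length [1,2,4,3::nat]. \<forall>b<length [1,2,4,3::nat]. p (i a) < p (i b) \<longleftrightarrow> [1,2,4,3::nat] ! a < [1,2,4,3] ! b"
    unfolding contains_def by blast
  have "1 \<le> i 0" "i 0 < i 1" "i 1 < i 2" "i 2 < i 3" "i 3 \<le> n" using h1[rule_format, of 0] h1[rule_format, of 3]
     h2[rule_format, of 0 1] h2[rule_format, of 1 2] h2[rule_format, of 2 3] by auto
  moreover have "p (i 0) < p (i 1)" "p (i 1) < p (i 3)" "p (i 3) < p (i 2)"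
    using h3[rule_format, of 0 1] h3[rule_format, of 1 3] h3[rule_format, of 3 2] by auto
  ultimately show "\<exists>a b c d. 1\<le>a \<and> a<b \<and> b<c \<and> c<d \<and> d\<le>n \<and> p a < p b \<and> p b < p d \<and> p d < p c" by blast
next
  assume "\<exists>a b c d. 1\<le>a \<and> a<b \<and> b<c \<and> c<d \<and> d\<le>n \<and> p a < p b \<and> p b < p d \<and> p d < p c"
  then obtain a b c d where h: "1\<le>a" "a<b" "b<c" "c<d" "d\<le>n" "p a < p b" "p b < p d" "p d < p c" by blast
  let ?i = "\<lambda>t. [a,b,c,d] ! t"
  have "(\<forall>t<length [1,2,4,3::nat]. ?i t \<in> {1..n}) \<and>
        (\<forall>s t. s < t \<and> t < length [1,2,4,3::nat] \<longrightarrow> ?i s < ?i t) \<and>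
        (\<forall>s<length [1,2,4,3::nat]. \<forall>t<length [1,2,4,3::nat]. p (?i s) < p (?i t) \<longleftrightarrow> [1,2,4,3::nat] ! s < [1,2,4,3] ! t)"
    using h by (auto simp: less_Suc_eq numeral_eq_Suc)
  then show "contains n p [1,2,4,3]" unfolding contains_def by blast
qed

lemma c2143: "contains n p [2,1,4,3] \<longleftrightarrow> (\<exists>a b c d. 1\<le>a \<and> a<b \<and> b<c \<and> c<d \<and> d\<le>n \<and> p b < p a \<and> p a < p d \<and> p d < p c)"
proof
  assume "contains n p [2,1,4,3]"
  then obtain i where h1: "\<forall>a<length [2,1,4,3::nat]. i a \<in> {1..n}" and h2: "\<forall>a b. a < b \<and> b < length [2,1,4,3::nat] \<longrightarrow> i a < i b"
    and h3: "\<forall>a<length [2,1,4,3::nat]. \<forall>b<length [2,1,4,3::nat]. p (i a) < p (i b) \<longleftrightarrow> [2,1,4,3::nat] ! a < [2,1,4,3] ! b"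
    unfolding contains_def by blast
  have "1 \<le> i 0" "i 0 < i 1" "i 1 < i 2" "i 2 < i 3" "i 3 \<le> n" using h1[rule_format, of 0] h1[rule_format, of 3]
     h2[rule_format, of 0 1] h2[rule_format, of 1 2] h2[rule_format, of 2 3] by auto
  moreover have "p (i 1) < p (i 0)" "p (i 0) < p (i 3)" "p (i 3) < p (i 2)"
    using h3[rule_format, of 1 0] h3[rule_format, of 0 3] h3[rule_format, of 3 2] by auto
  ultimately show "\<exists>a b c d. 1\<le>a \<and> a<b \<and> b<c \<and> c<d \<and> d\<le>n \<and> p b < p a \<and> p a < p d \<and> p d < p c" by blast
next
  assume "\<exists>a b c d. 1\<le>a \<and> a<b \<and> b<c \<and> c<d \<and> d\<le>n \<and> p b < p a \<and> p a < p d \<and> p d < p c"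
  then obtain a b c d where h: "1\<le>a" "a<b" "b<c" "c<d" "d\<le>n" "p b < p a" "p a < p d" "p d < p c" by blast
  let ?i = "\<lambda>t. [a,b,c,d] ! t"
  have "(\<forall>t<length [2,1,4,3::nat]. ?i t \<in> {1..n}) \<and>
        (\<forall>s t. s < t \<and> t < length [2,1,4,3::nat] \<longrightarrow> ?i s < ?i t) \<and>
        (\<forall>s<length [2,1,4,3::nat]. \<forall>t<length [2,1,4,3::nat]. p (?i s) < p (?i t) \<longleftrightarrow> [2,1,4,3::nat] ! s < [2,1,4,3] ! t)"
    using h by (auto simp: less_Suc_eq numeral_eq_Suc)
  then show "contains n p [2,1,4,3]" unfolding contains_def by blast
qed



definition strc :: "nat \<Rightarrow> (nat \<Rightarrow> nat) \<Rightarrow> nat \<Rightarrow> bool" where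
 "strc n p i \<longleftrightarrow> 1 \<le> i \<and> i < n \<and> p i = n \<and>
   (\<forall>x y. i<x \<and> x<y \<and> y\<le>n \<longrightarrow> p x < p y) \<and>
   (\<forall>x y. 1\<le>x \<and> x<i \<and> 1\<le>y \<and> y<i \<and> p x < p n \<and> p y < p n \<longrightarrow> x = y) \<and>
   (\<forall>x y. 1\<le>x \<and> x<y \<and> y<i \<and> p n < p x \<and> p n < p y \<longrightarrow> p x < p y) \<and>
   (\<forall>y z. 1<y \<and> y<i \<and> i<z \<and> z\<le>n \<and> p y < p n \<longrightarrow> p y < p z)"

definition FO :: "nat \<Rightarrow> (nat \<Rightarrow> nat) \<Rightarrow> bool" where
 "FO n p \<longleftrightarrow> \<not>(\<exists>a b c. 1\<le>a \<and> a<b \<and> b<c \<and> c\<le>n \<and> p c < p b \<and> p b < p a) \<and>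
   \<not>(\<exists>a b c d. 1\<le>a \<and> a<b \<and> b<c \<and> c<d \<and> d\<le>n \<and> p a < p b \<and> p b < p d \<and> p d < p c) \<and>
   \<not>(\<exists>a b c d. 1\<le>a \<and> a<b \<and> b<c \<and> c<d \<and> d\<le>n \<and> p b < p a \<and> p a < p d \<and> p d < p c)"

lemma good_FO: "(avoids n p [1,2,4,3] \<and> avoids n p [2,1,4,3] \<and> avoids n p [3,2,1]) \<longleftrightarrow> FO n p"
  unfolding avoids_def FO_def c321 c1243 c2143 by blast

lemma perm_facts:
  assumes "p permutes {1..n}"
  shows "\<And>x. 1 \<le> x \<Longrightarrow> x \<le> n \<Longrightarrow> 1 \<le> p x \<and> p x \<le> n"
    and "\<And>x y. p x = p y \<Longrightarrow> x = y"
  using permutes_in_image[OF assms] permutes_inj[OF assms] by (auto simp: inj_def)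



lemma strc_FO:
  assumes pp: "p permutes {1..n}" and s: "strc n p i"
  shows "FO n p"
proof -
  note rng = perm_facts(1)[OF pp] and inj = perm_facts(2)[OF pp]
  have i: "1 \<le> i" "i < n" "p i = n" using s unfolding strc_def by auto
  have S2: "\<And>x y. i<x \<Longrightarrow> x<y \<Longrightarrow> y\<le>n \<Longrightarrow> p x < p y" using s unfolding strc_def by blast
  have S3: "\<And>x y. 1\<le>x \<Longrightarrow> x<i \<Longrightarrow> 1\<le>y \<Longrightarrow> y<i \<Longrightarrow> p x < p n \<Longrightarrow> p y < p n \<Longrightarrow> x = y"
    using s unfolding strc_def by blast
  have S4: "\<And>x y. 1\<le>x \<Longrightarrow> x<y \<Longrightarrow> y<i \<Longrightarrow> p n < p x \<Longrightarrow> p n < p y \<Longrightarrow> p x < p y"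
    using s unfolding strc_def by blast
  have S5: "\<And>y z. 1<y \<Longrightarrow> y<i \<Longrightarrow> i<z \<Longrightarrow> z\<le>n \<Longrightarrow> p y < p n \<Longrightarrow> p y < p z"
    using s unfolding strc_def by blast
  have tl: "p x \<le> p n" if "i<x" "x\<le>n" for x
  proof (cases "x = n")
    case False then show ?thesis using S2[of x n] that by auto
  qed simp
  have nn: "p x < n" if "1\<le>x" "x\<le>n" "x \<noteq> i" for x
  proof -
    have "p x \<noteq> p i" using inj that by blast
    then show ?thesis using rng[of x] that i by auto
  qed
  have ne: "p x \<noteq> p n" if "x \<noteq> n" for x using inj that by blast
  have A: False if h: "1\<le>a" "a<b" "b<c" "c\<le>n" "p c < p b" "p b < p a" for a b c
  proof -
    consider "b > i" | "b = i" | "b < i" by linarith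
    then show False
    proof cases
      case 1 then show ?thesis using S2[of b c] h by auto
    next
      case 2 then show ?thesis using rng[of a] h i by auto
    next
      case 3
      note b3 = 3
      consider "c = i" | "c < i" | "c > i" by linarith
      then show ?thesis
      proof cases
        case 1 then show ?thesis using nn[of b] h i b3 by auto
      next
        case 2
        have nb: "p b \<noteq> p n" "p c \<noteq> p n" "p a \<noteq> p n" using ne h 2 i by auto
        have c1: "\<not> p n < p c"
        proof
          assume "p n < p c"
          then show False using S4[of b c] h 2 b3 by auto
        qed
        then have c2: "p c < p n" using nb by auto
        have "\<not> p b < p n" using S3[of b c] h 2 b3 c2 by auto
        then have "p n < p b" using nb by auto
        moreover have "\<not> p a < p n" using S3[of a c] h 2 b3 c2 by auto
        then have "p n < p a" using nb by auto
        ultimately show ?thesis using S4[of a b] h b3 by auto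
      next
        case 3
        have nb: "p b \<noteq> p n" "p a \<noteq> p n" using ne h b3 i by auto
        show ?thesis
        proof (cases "p b < p n")
          case True then show ?thesis using S5[of b c] h b3 3 by auto
        next
          case False
          then have "p n < p b" using nb by auto
          then show ?thesis using S4[of a b] h b3 by auto
        qed
      qed
    qed
  qed
  have B: False if h: "1\<le>a" "a<b" "b<c" "c<d" "d\<le>n" "p a < p d" "p b < p d" "p d < p c" for a b c d
  proof -
    consider "c > i" | "c = i" | "c < i" by linarith
    then show False
    proof cases
      case 1 then show ?thesis using S2[of c d] h by auto
    next
      case 2 then show ?thesis using tl[of d] S3[of a b] h by auto
    next
      case 3
      note b3 = 3
      consider "d = i" | "d < i" | "d > i" by linarith
      then show ?thesis
      proof cases
        case 1 then show ?thesis using rng[of c] h i b3 by auto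
      next
        case 2
        have nb: "p c \<noteq> p n" "p d \<noteq> p n" using ne h 2 i by auto
        show ?thesis
        proof (cases "p d < p n")
          case True then show ?thesis using S3[of a b] h 2 by auto
        next
          case False
          then have "p n < p d" using nb by auto
          then show ?thesis using S4[of c d] h 2 by auto
        qed
      next
        case 3
        then show ?thesis using tl[of d] S3[of a b] h b3 3 by auto
      qed
    qed
  qed
  have B2: False if h: "1\<le>a" "a<b" "b<c" "c<d" "d\<le>n" "p a < p b" "p b < p d" "p d < p c" for a b c d
    using B[OF h(1-5)] h(6-8) by auto
  have B3: False if h: "1\<le>a" "a<b" "b<c" "c<d" "d\<le>n" "p b < p a" "p a < p d" "p d < p c" for a b c d
    using B[OF h(1-5)] h(6-8) by auto
  show ?thesis unfolding FO_def using A B2 B3 by blast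
qed



lemma FO_strc:
  assumes pp: "p permutes {1..n}" and f: "FO n p" and pn: "p n \<noteq> n" and n1: "1 \<le> n"
  shows "\<exists>i. strc n p i"
proof -
  note rng = perm_facts(1)[OF pp] and inj = perm_facts(2)[OF pp]
  have "n \<in> p ` {1..n}" using permutes_image[OF pp] n1 by auto
  then obtain i where i0: "1 \<le> i" "i \<le> n" "p i = n" by auto
  have "i \<noteq> n" using pn i0 by auto
  with i0 have i: "1 \<le> i" "i < n" "p i = n" by auto
  have A: "\<And>a b c. 1\<le>a \<Longrightarrow> a<b \<Longrightarrow> b<c \<Longrightarrow> c\<le>n \<Longrightarrow> p c < p b \<Longrightarrow> p b < p a \<Longrightarrow> False"
    using f unfolding FO_def by blast
  have B: "\<And>a b c d. 1\<le>a \<Longrightarrow> a<b \<Longrightarrow> b<c \<Longrightarrow> c<d \<Longrightarrow> d\<le>n \<Longrightarrow> p a < p b \<Longrightarrow> p b < p d \<Longrightarrow> p d < p c \<Longrightarrow> False"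
    using f unfolding FO_def by blast
  have C: "\<And>a b c d. 1\<le>a \<Longrightarrow> a<b \<Longrightarrow> b<c \<Longrightarrow> c<d \<Longrightarrow> d\<le>n \<Longrightarrow> p b < p a \<Longrightarrow> p a < p d \<Longrightarrow> p d < p c \<Longrightarrow> False"
    using f unfolding FO_def by blast
  have nn: "p x < n" if "1\<le>x" "x\<le>n" "x \<noteq> i" for x
  proof -
    have "p x \<noteq> p i" using inj that by blast
    then show ?thesis using rng[of x] that i by auto
  qed
  have S2: "p x < p y" if h: "i<x" "x<y" "y\<le>n" for x y
  proof (rule ccontr)
    assume "\<not> p x < p y"
    moreover have "p x \<noteq> p y" using inj h by blast
    ultimately have "p y < p x" by auto
    then show False using A[of i x y] nn[of x] h i by auto
  qed
  have pni: "p n < p i" using nn[of n] i n1 by auto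
  have S3: "x = y" if h: "1\<le>x" "x<i" "1\<le>y" "y<i" "p x < p n" "p y < p n" for x y
  proof -
    have *: False if h: "1\<le>x" "x<y" "y<i" "p x < p n" "p y < p n" for x y
    proof -
      have "p x \<noteq> p y" using inj h by blast
      then consider "p x < p y" | "p y < p x" by linarith
      then show False
      proof cases
        case 1 then show ?thesis using B[of x y i n] h i pni by auto
      next
        case 2 then show ?thesis using C[of x y i n] h i pni by auto
      qed
    qed
    show ?thesis
    proof (rule ccontr)
      assume "x \<noteq> y"
      then consider "x < y" | "y < x" by linarith
      then show False
      proof cases
        case 1 then show ?thesis using *[of x y] h by auto
      next
        case 2 then show ?thesis using *[of y x] h by auto
      qed
    qed
  qed
  have S4: "p x < p y" if h: "1\<le>x" "x<y" "y<i" "p n < p x" "p n < p y" for x y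
  proof -
    have "p x \<noteq> p y" using inj h by blast
    moreover have "\<not> p y < p x" using A[of x y n] h i by auto
    ultimately show ?thesis by auto
  qed
  have S5: "p y < p z" if h: "1<y" "y<i" "i<z" "z\<le>n" "p y < p n" for y z
  proof -
    have "(1::nat) \<noteq> n" using h i by auto
    then have "p 1 \<noteq> p n" using inj by blast
    moreover have "\<not> p 1 < p n" using S3[of 1 y] h by auto
    ultimately have p1: "p n < p 1" by auto
    have "y \<noteq> z" using h by auto
    then have "p y \<noteq> p z" using inj by blast
    moreover have "\<not> p z < p y" using A[of 1 y z] h p1 by auto
    ultimately show ?thesis by auto
  qed
  show ?thesis unfolding strc_def using i S2 S3 S4 S5 by blast
qed



lemma rank_perm:
  fixes p :: "nat \<Rightarrow> nat"
  assumes pp: "p permutes {1..n}" and x: "x \<in> {1..n}"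
  shows "card {y\<in>{1..n}. p y < p x} = p x - 1"
proof -
  have rng: "p y \<in> {1..n} \<longleftrightarrow> y \<in> {1..n}" for y using permutes_in_image[OF pp] .
  have im: "p ` {y\<in>{1..n}. p y < p x} = {1..<p x}"
  proof
    show "p ` {y\<in>{1..n}. p y < p x} \<subseteq> {1..<p x}"
    proof
      fix z assume "z \<in> p ` {y\<in>{1..n}. p y < p x}"
      then obtain y where y: "y \<in> {1..n}" "p y < p x" "z = p y" by blast
      have "p y \<in> {1..n}" using y(1) rng by blast
      then show "z \<in> {1..<p x}" using y by simp
    qed
    show "{1..<p x} \<subseteq> p ` {y\<in>{1..n}. p y < p x}"
    proof
      fix z assume z: "z \<in> {1..<p x}"
      have "p x \<in> {1..n}" using x rng by blast
      then have "z \<in> {1..n}" using z by simp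
      then have "z \<in> p ` {1..n}" using permutes_image[OF pp] by simp
      then obtain y where "y \<in> {1..n}" "z = p y" by blast
      then show "z \<in> p ` {y\<in>{1..n}. p y < p x}" using z by auto
    qed
  qed
  have "inj_on p {y\<in>{1..n}. p y < p x}" using permutes_inj_on[OF pp] .
  then have "card {y\<in>{1..n}. p y < p x} = card {1..<p x}" using im card_image by metis
  then show ?thesis by simp
qed

lemma perm_eq_order:
  fixes p q :: "nat \<Rightarrow> nat"
  assumes pp: "p permutes {1..n}" and qq: "q permutes {1..n}"
    and h: "\<And>x y. x \<in> {1..n} \<Longrightarrow> y \<in> {1..n} \<Longrightarrow> q x < q y \<Longrightarrow> p x < p y"
  shows "p = q"
proof
  fix x
  show "p x = q x"
  proof (cases "x \<in> {1..n}")
    case False then show ?thesis by (simp add: permutes_not_in[OF pp] permutes_not_in[OF qq])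
  next
    case True
    have "{y\<in>{1..n}. p y < p x} = {y\<in>{1..n}. q y < q x}"
    proof (rule Collect_cong, rule iffI)
      fix y assume "y \<in> {1..n} \<and> p y < p x"
      then have y: "y \<in> {1..n}" "p y < p x" by auto
      have "y \<noteq> x" using y(2) by auto
      then have "q y \<noteq> q x" using permutes_inj[OF qq] by (auto simp: inj_def)
      moreover have "\<not> q x < q y" using h[OF True y(1)] y by auto
      ultimately show "y \<in> {1..n} \<and> q y < q x" using y by auto
    next
      fix y assume "y \<in> {1..n} \<and> q y < q x"
      then show "y \<in> {1..n} \<and> p y < p x" using h[OF _ True] by auto
    qed
    then have "p x - 1 = q x - 1" using rank_perm[OF pp True] rank_perm[OF qq True] by simp
    moreover have "1 \<le> p x" "1 \<le> q x" using permutes_in_image[OF pp] permutes_in_image[OF qq] True by auto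
    ultimately show ?thesis by simp
  qed
qed

lemma downclosed_interval:
  fixes D :: "nat set"
  assumes sub: "D \<subseteq> {a<..b}" and dc: "\<And>x y. a < x \<Longrightarrow> x < y \<Longrightarrow> y \<in> D \<Longrightarrow> x \<in> D"
  shows "D = {a<..a + card D}"
proof (cases "D = {}")
  case True then show ?thesis by simp
next
  case False
  have fin: "finite D" using sub finite_subset by blast
  define m where "m = Max D"
  have mD: "m \<in> D" using fin False m_def by simp
  have "D = {a<..m}"
  proof
    show "D \<subseteq> {a<..m}" using sub fin m_def by auto
    show "{a<..m} \<subseteq> D"
    proof
      fix x assume "x \<in> {a<..m}"
      then show "x \<in> D" using dc[of x m] mD by (cases "x = m") auto
    qed
  qed
  moreover have "a < m" using mD sub by auto
  ultimately have "card D = m - a" by simp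
  then have "a + card D = m" using \<open>a < m\<close> by simp
  then show ?thesis using \<open>D = {a<..m}\<close> by simp
qed



definition Phi :: "nat \<Rightarrow> nat \<Rightarrow> nat \<Rightarrow> nat \<Rightarrow> nat \<Rightarrow> nat" where
 "Phi n i k r x = (if x < 1 \<or> n < x then x else if x < k then n-i+1+x else if x = k then r+1
    else if x < i then n-i+x else if x = i then n else if x \<le> i+r then x-i else x-i+1)"

lemma perm_from:
  fixes f :: "nat \<Rightarrow> nat"
  assumes "\<And>x. x \<notin> {1..n} \<Longrightarrow> f x = x" "\<And>x. x \<in> {1..n} \<Longrightarrow> f x \<in> {1..n}"
    "\<And>x y. x \<in> {1..n} \<Longrightarrow> y \<in> {1..n} \<Longrightarrow> f x = f y \<Longrightarrow> x = y"
  shows "f permutes {1..n}"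
proof (rule bij_imp_permutes)
  have inj: "inj_on f {1..n}" using assms(3) by (auto simp: inj_on_def)
  have "f ` {1..n} \<subseteq> {1..n}" using assms(2) by auto
  then have "f ` {1..n} = {1..n}" using endo_inj_surj[OF _ _ inj] by simp
  then show "bij_betw f {1..n} {1..n}" using inj by (simp add: bij_betw_def)
  show "\<And>x. x \<notin> {1..n} \<Longrightarrow> f x = x" by fact
qed

lemma PhiA:
  assumes "1 \<le> i" "i < n"
  shows "Phi n i 0 (n-i) permutes {1..n} \<and> strc n (Phi n i 0 (n-i)) i"
proof
  show "Phi n i 0 (n-i) permutes {1..n}"
    by (rule perm_from) (use assms in \<open>auto simp: Phi_def split: if_splits\<close>)
  show "strc n (Phi n i 0 (n-i)) i"
    unfolding strc_def using assms by (auto simp: Phi_def split: if_splits)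
qed

lemma PhiB:
  assumes "2 \<le> i" "i < n" "r < n - i"
  shows "Phi n i 1 r permutes {1..n} \<and> strc n (Phi n i 1 r) i"
proof
  show "Phi n i 1 r permutes {1..n}"
    by (rule perm_from) (use assms in \<open>auto simp: Phi_def split: if_splits\<close>)
  show "strc n (Phi n i 1 r) i"
    unfolding strc_def using assms by (auto simp: Phi_def split: if_splits)
qed

lemma PhiC:
  assumes "2 \<le> k" "k < i" "i < n"
  shows "Phi n i k 0 permutes {1..n} \<and> strc n (Phi n i k 0) i"
proof
  show "Phi n i k 0 permutes {1..n}"
    by (rule perm_from) (use assms in \<open>auto simp: Phi_def split: if_splits\<close>)
  show "strc n (Phi n i k 0) i"
    unfolding strc_def using assms by (auto simp: Phi_def split: if_splits)
qed



lemma strc_Phi: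
  assumes pp: "p permutes {1..n}" and s: "strc n p i"
  shows "\<exists>k r. (k = 0 \<and> r = n-i \<or> k = 1 \<and> 2 \<le> i \<and> r < n-i \<or> 2 \<le> k \<and> k < i \<and> r = 0) \<and> p = Phi n i k r"
proof -
  note rng = perm_facts(1)[OF pp] and inj = perm_facts(2)[OF pp]
  have i: "1 \<le> i" "i < n" "p i = n" using s unfolding strc_def by auto
  have S2: "\<And>x y. i<x \<Longrightarrow> x<y \<Longrightarrow> y\<le>n \<Longrightarrow> p x < p y" using s unfolding strc_def by blast
  have S3: "\<And>x y. 1\<le>x \<Longrightarrow> x<i \<Longrightarrow> 1\<le>y \<Longrightarrow> y<i \<Longrightarrow> p x < p n \<Longrightarrow> p y < p n \<Longrightarrow> x = y"
    using s unfolding strc_def by blast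
  have S4: "\<And>x y. 1\<le>x \<Longrightarrow> x<y \<Longrightarrow> y<i \<Longrightarrow> p n < p x \<Longrightarrow> p n < p y \<Longrightarrow> p x < p y"
    using s unfolding strc_def by blast
  have S5: "\<And>y z. 1<y \<Longrightarrow> y<i \<Longrightarrow> i<z \<Longrightarrow> z\<le>n \<Longrightarrow> p y < p n \<Longrightarrow> p y < p z"
    using s unfolding strc_def by blast
  have tl: "p x \<le> p n" if "i<x" "x\<le>n" for x
  proof (cases "x = n")
    case False then show ?thesis using S2[of x n] that by auto
  qed simp
  have nn: "p x < n" if "1\<le>x" "x\<le>n" "x \<noteq> i" for x
  proof -
    have "p x \<noteq> p i" using inj that by blast
    then show ?thesis using rng[of x] that i by auto
  qed
  have ne: "p x \<noteq> p n" if "x \<noteq> n" for x using inj that by blast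
  show ?thesis
  proof (cases "\<exists>k. 1 \<le> k \<and> k < i \<and> p k < p n")
    case False
    have lg: "p n < p x" if "1 \<le> x" "x < i" for x
    proof -
      have "\<not> p x < p n" using False that by blast
      moreover have "x \<noteq> n" using that i by simp
      then have "p x \<noteq> p n" using ne by blast
      ultimately show ?thesis by simp
    qed
    have PA: "Phi n i 0 (n-i) permutes {1..n}" using PhiA[OF i(1,2)] by blast
    have "p = Phi n i 0 (n-i)"
    proof (rule perm_eq_order[OF pp PA])
      fix x y assume x: "x \<in> {1..n}" and y: "y \<in> {1..n}" and lt: "Phi n i 0 (n-i) x < Phi n i 0 (n-i) y"
      show "p x < p y"
      proof -
        have vx: "Phi n i 0 (n-i) x = (if x < i then n-i+x else if x = i then n else x-i)" using x i by (simp add: Phi_def)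
        have vy: "Phi n i 0 (n-i) y = (if y < i then n-i+y else if y = i then n else y-i)" using y i by (simp add: Phi_def)
        note F = S2[of x y] S4[of x y] tl[of x] tl[of y] lg[of x] lg[of y] nn[of x] nn[of y] x y i
        consider "x < i" | "x = i" | "x > i" by linarith
        then show ?thesis
        proof cases
          case 1
          consider "y < i" | "y = i" | "y > i" by linarith
          then show ?thesis
          proof cases
            case 1 then show ?thesis using `x<i` lt vx vy F by auto
          next
            case 2 then show ?thesis using `x<i` lt vx vy F by auto
          next
            case 3 then show ?thesis using `x<i` lt vx vy F by auto
          qed
        next
          case 2 then show ?thesis using lt vx vy y i by (auto split: if_splits)
        next
          case 3
          consider "y < i" | "y = i" | "y > i" by linarith
          then show ?thesis
          proof cases
            case 1 then show ?thesis using `x>i` lt vx vy F by auto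
          next
            case 2 then show ?thesis using `x>i` lt vx vy F by auto
          next
            case 3 then show ?thesis using `x>i` lt vx vy F by auto
          qed
        qed
      qed
    qed
    then show ?thesis by blast
  next
    case True
    then obtain k where k: "1 \<le> k" "k < i" "p k < p n" by blast
    have lg: "p n < p x" if "1 \<le> x" "x < i" "x \<noteq> k" for x
    proof -
      have "\<not> p x < p n" using S3[of x k] that k by auto
      then show ?thesis using ne[of x] that i by auto
    qed
    define D where "D = {x. i < x \<and> x \<le> n \<and> p x < p k}"
    define r where "r = card D"
    have "D = {i<..i + card D}"
    proof (rule downclosed_interval)
      show "D \<subseteq> {i<..n}" unfolding D_def by auto
      fix x y assume "i < x" "x < y" "y \<in> D"
      then show "x \<in> D" using S2[of x y] unfolding D_def by auto
    qed
    then have Dr: "D = {i<..i+r}" unfolding r_def .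
    have "n \<notin> D" unfolding D_def using k by auto
    then have "n \<notin> {i<..i+r}" using Dr by simp
    then have rlt: "r < n - i" using i by auto
    have lo: "p x < p k" if "i < x" "x \<le> i + r" for x
    proof -
      have "x \<in> {i<..i+r}" using that by simp
      then have "x \<in> D" using Dr by simp
      then show ?thesis unfolding D_def by simp
    qed
    have hi: "p k < p x" if "i + r < x" "x \<le> n" for x
    proof -
      have "x \<notin> {i<..i+r}" using that by simp
      then have "x \<notin> D" using Dr by simp
      then have "\<not> p x < p k" using that rlt unfolding D_def by auto
      moreover have "x \<noteq> k" using that k by auto
      then have "p x \<noteq> p k" using inj by blast
      ultimately show ?thesis by auto
    qed
    have kr: "k = 1 \<or> r = 0"
    proof (rule ccontr)
      assume "\<not> (k = 1 \<or> r = 0)"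
      then have "1 < k" "0 < r" using k by auto
      then show False using S5[of k "i+1"] lo[of "i+1"] k i rlt by auto
    qed
    have par: "k = 1 \<and> 2 \<le> i \<and> r < n-i \<or> 2 \<le> k \<and> k < i \<and> r = 0" using kr k rlt by auto
    have PP: "Phi n i k r permutes {1..n}"
    proof (cases "k = 1")
      case True
      then show ?thesis using par PhiB[of i n r] i by simp
    next
      case False
      then show ?thesis using par PhiC[of k i n] i by simp
    qed
    have "p = Phi n i k r"
    proof (rule perm_eq_order[OF pp PP])
      fix x y assume x: "x \<in> {1..n}" and y: "y \<in> {1..n}" and lt: "Phi n i k r x < Phi n i k r y"
      show "p x < p y"
      proof -
        have vx: "Phi n i k r x = (if x < k then n-i+1+x else if x = k then r+1 else if x < i then n-i+x else if x = i then n else if x \<le> i+r then x-i else x-i+1)" using x k by (simp add: Phi_def)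
        have vy: "Phi n i k r y = (if y < k then n-i+1+y else if y = k then r+1 else if y < i then n-i+y else if y = i then n else if y \<le> i+r then y-i else y-i+1)" using y k by (simp add: Phi_def)
        note F = S2[of x y] S4[of x y] tl[of x] tl[of y] lg[of x] lg[of y] nn[of x] nn[of y] lo[of x] lo[of y] hi[of x] hi[of y] x y i k par
        consider "x < k" | "x = k" | "k < x \<and> x < i" | "x = i" | "i < x \<and> x \<le> i + r" | "i + r < x" by linarith
        then show ?thesis
        proof cases
          case 1 note cx = this
          consider "y < k" | "y = k" | "k < y \<and> y < i" | "y = i" | "i < y \<and> y \<le> i + r" | "i + r < y" by linarith
          then show ?thesis
          proof cases
            case 1 then show ?thesis using cx lt vx vy F by (auto split: if_splits)
          next
            case 2 then show ?thesis using cx lt vx vy F by (auto split: if_splits)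
          next
            case 3 then show ?thesis using cx lt vx vy F by (auto split: if_splits)
          next
            case 4 then show ?thesis using cx lt vx vy F by (auto split: if_splits)
          next
            case 5 then show ?thesis using cx lt vx vy F by (auto split: if_splits)
          next
            case 6 then show ?thesis using cx lt vx vy F by (auto split: if_splits)
          qed
        next
          case 2 note cx = this
          consider "y < k" | "y = k" | "k < y \<and> y < i" | "y = i" | "i < y \<and> y \<le> i + r" | "i + r < y" by linarith
          then show ?thesis
          proof cases
            case 1 then show ?thesis using cx lt vx vy F by (auto split: if_splits)
          next
            case 2 then show ?thesis using cx lt vx vy F by (auto split: if_splits)
          next
            case 3 then show ?thesis using cx lt vx vy F by (auto split: if_splits)
          next
            case 4 then show ?thesis using cx lt vx vy F by (auto split: if_splits)
          next
            case 5 then show ?thesis using cx lt vx vy F by (auto split: if_splits)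
          next
            case 6 then show ?thesis using cx lt vx vy F by (auto split: if_splits)
          qed
        next
          case 3 note cx = this
          consider "y < k" | "y = k" | "k < y \<and> y < i" | "y = i" | "i < y \<and> y \<le> i + r" | "i + r < y" by linarith
          then show ?thesis
          proof cases
            case 1 then show ?thesis using cx lt vx vy F by (auto split: if_splits)
          next
            case 2 then show ?thesis using cx lt vx vy F by (auto split: if_splits)
          next
            case 3 then show ?thesis using cx lt vx vy F by (auto split: if_splits)
          next
            case 4 then show ?thesis using cx lt vx vy F by (auto split: if_splits)
          next
            case 5 then show ?thesis using cx lt vx vy F by (auto split: if_splits)
          next
            case 6 then show ?thesis using cx lt vx vy F by (auto split: if_splits)
          qed
        next
          case 4 note cx = this
          consider "y < k" | "y = k" | "k < y \<and> y < i" | "y = i" | "i < y \<and> y \<le> i + r" | "i + r < y" by linarith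
          then show ?thesis
          proof cases
            case 1 then show ?thesis using cx lt vx vy F by (auto split: if_splits)
          next
            case 2 then show ?thesis using cx lt vx vy F by (auto split: if_splits)
          next
            case 3 then show ?thesis using cx lt vx vy F by (auto split: if_splits)
          next
            case 4 then show ?thesis using cx lt vx vy F by (auto split: if_splits)
          next
            case 5 then show ?thesis using cx lt vx vy F by (auto split: if_splits)
          next
            case 6 then show ?thesis using cx lt vx vy F by (auto split: if_splits)
          qed
        next
          case 5 note cx = this
          consider "y < k" | "y = k" | "k < y \<and> y < i" | "y = i" | "i < y \<and> y \<le> i + r" | "i + r < y" by linarith
          then show ?thesis
          proof cases
            case 1 then show ?thesis using cx lt vx vy F by (auto split: if_splits)
          next
            case 2 then show ?thesis using cx lt vx vy F by (auto split: if_splits)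
          next
            case 3 then show ?thesis using cx lt vx vy F by (auto split: if_splits)
          next
            case 4 then show ?thesis using cx lt vx vy F by (auto split: if_splits)
          next
            case 5 then show ?thesis using cx lt vx vy F by (auto split: if_splits)
          next
            case 6 then show ?thesis using cx lt vx vy F by (auto split: if_splits)
          qed
        next
          case 6 note cx = this
          consider "y < k" | "y = k" | "k < y \<and> y < i" | "y = i" | "i < y \<and> y \<le> i + r" | "i + r < y" by linarith
          then show ?thesis
          proof cases
            case 1 then show ?thesis using cx lt vx vy F by (auto split: if_splits)
          next
            case 2 then show ?thesis using cx lt vx vy F by (auto split: if_splits)
          next
            case 3 then show ?thesis using cx lt vx vy F by (auto split: if_splits)
          next
            case 4 then show ?thesis using cx lt vx vy F by (auto split: if_splits)
          next
            case 5 then show ?thesis using cx lt vx vy F by (auto split: if_splits)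
          next
            case 6 then show ?thesis using cx lt vx vy F by (auto split: if_splits)
          qed
        qed
      qed
    qed
    then show ?thesis using par by blast
  qed
qed



definition PA :: "nat \<Rightarrow> (nat \<times> nat \<times> nat) set" where "PA n = (\<lambda>i. (i, 0, n-i)) ` {1..<n}"
definition PB :: "nat \<Rightarrow> (nat \<times> nat \<times> nat) set" where "PB n = (\<lambda>(i,r). (i, 1, r)) ` (SIGMA i:{2..<n}. {..<n-i})"
definition PC :: "nat \<Rightarrow> (nat \<times> nat \<times> nat) set" where "PC n = (\<lambda>(i,k). (i, k, 0)) ` (SIGMA i:{2..<n}. {2..<i})"
definition Pset :: "nat \<Rightarrow> (nat \<times> nat \<times> nat) set" where "Pset n = PA n \<union> PB n \<union> PC n"

lemma Pset_iff: "(i,k,r) \<in> Pset n \<longleftrightarrow>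
   (1 \<le> i \<and> i < n \<and> k = 0 \<and> r = n-i) \<or> (2 \<le> i \<and> i < n \<and> k = 1 \<and> r < n-i) \<or> (2 \<le> k \<and> k < i \<and> i < n \<and> r = 0)"
  unfolding Pset_def PA_def PB_def PC_def by auto

lemma card_Pset: "card (Pset n) = (n - 1) + (\<Sum>i\<in>{2..<n}. n - i) + (\<Sum>i\<in>{2..<n}. i - 2)"
proof -
  have cA: "card (PA n) = n - 1" unfolding PA_def by (subst card_image) (auto simp: inj_on_def)
  have cB: "card (PB n) = (\<Sum>i\<in>{2..<n}. n - i)" unfolding PB_def
    by (subst card_image) (auto simp: inj_on_def)
  have cC: "card (PC n) = (\<Sum>i\<in>{2..<n}. i - 2)" unfolding PC_def
    by (subst card_image) (auto simp: inj_on_def)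
  have fA: "finite (PA n)" "finite (PB n)" "finite (PC n)" unfolding PA_def PB_def PC_def by auto
  have d1: "PA n \<inter> PB n = {}" "PA n \<inter> PC n = {}" "PB n \<inter> PC n = {}" unfolding PA_def PB_def PC_def by auto
  have "card (Pset n) = card (PA n \<union> PB n) + card (PC n)" unfolding Pset_def
    using fA d1 by (subst card_Un_disjoint) auto
  also have "card (PA n \<union> PB n) = card (PA n) + card (PB n)" using fA d1 by (subst card_Un_disjoint) auto
  finally show ?thesis using cA cB cC by simp
qed

lemma card_Pset2: "2 \<le> n \<Longrightarrow> card (Pset n) = (n - 1) + (n - 2) * (n - 2)"
proof -
  assume n: "2 \<le> n"
  have s: "(\<Sum>i\<in>{2..<n}. n - i) + (\<Sum>i\<in>{2..<n}. i - 2) = (\<Sum>i\<in>{2..<n}. (n - i) + (i - 2))"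
    by (rule sum.distrib[symmetric])
  also have "\<dots> = (\<Sum>i\<in>{2..<n}. n - 2)" by (rule sum.cong) auto
  also have "\<dots> = (n - 2) * (n - 2)" by simp
  finally have s: "(\<Sum>i\<in>{2..<n}. n - i) + (\<Sum>i\<in>{2..<n}. i - 2) = (n - 2) * (n - 2)" .
  show ?thesis unfolding card_Pset add.assoc s by (rule refl)
qed

lemma Phi_props: "(i,k,r) \<in> Pset n \<Longrightarrow> Phi n i k r permutes {1..n} \<and> strc n (Phi n i k r) i"
  unfolding Pset_iff using PhiA PhiB PhiC by auto

lemma inj_Phi_aux:
  assumes a: "(i,k,r) \<in> Pset n" and b: "(i',k',r') \<in> Pset n" and e: "Phi n i k r = Phi n i' k' r'"
  shows "i = i' \<and> k = k' \<and> r = r'"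
proof -
  have pa: "Phi n i k r permutes {1..n}" "strc n (Phi n i k r) i" using Phi_props[OF a] by auto
  have pb: "Phi n i' k' r' permutes {1..n}" "strc n (Phi n i' k' r') i'" using Phi_props[OF b] by auto
  have "Phi n i k r i = n" "Phi n i' k' r' i' = n" using pa(2) pb(2) unfolding strc_def by blast+
  then have "Phi n i k r i = Phi n i k r i'" using e by simp
  then have ii: "i = i'" using permutes_inj[OF pa(1)] by (auto simp: inj_def)
  have e1: "Phi n i k r 1 = Phi n i k' r' 1" "Phi n i k r n = Phi n i k' r' n"
    "Phi n i k r k = Phi n i k' r' k" "Phi n i k r k' = Phi n i k' r' k'"
    using fun_cong[OF e, of 1] fun_cong[OF e, of n] fun_cong[OF e, of k] fun_cong[OF e, of k'] ii by simp_all
  have vA: "Phi n i 0 (n-i) n = n - i" if "1 \<le> i" "i < n" for i using that by (simp add: Phi_def)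
  have vBn: "Phi n i 1 r n = n - i + 1" if "2 \<le> i" "i < n" "r < n - i" for i r using that by (simp add: Phi_def)
  have vB1: "Phi n i 1 r 1 = r + 1" if "2 \<le> i" "i < n" "r < n - i" for i r using that by (simp add: Phi_def)
  have vCn: "Phi n i k 0 n = n - i + 1" if "2 \<le> k" "k < i" "i < n" for i k using that by (simp add: Phi_def)
  have vC1: "Phi n i k 0 1 = n - i + 2" if "2 \<le> k" "k < i" "i < n" for i k using that by (simp add: Phi_def)
  have vCk: "Phi n i k 0 k = 1" if "2 \<le> k" "k < i" "i < n" for i k using that by (simp add: Phi_def)
  have vCx: "Phi n i k 0 x = n - i + 1 + x" if "2 \<le> k" "k < i" "i < n" "1 \<le> x" "x < k" for i k x
    using that by (simp add: Phi_def)
  have A: "(1 \<le> i \<and> i < n \<and> k = 0 \<and> r = n-i) \<or> (2 \<le> i \<and> i < n \<and> k = 1 \<and> r < n-i) \<or> (2 \<le> k \<and> k < i \<and> i < n \<and> r = 0)"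
    using a unfolding Pset_iff .
  have B: "(1 \<le> i \<and> i < n \<and> k' = 0 \<and> r' = n-i) \<or> (2 \<le> i \<and> i < n \<and> k' = 1 \<and> r' < n-i) \<or> (2 \<le> k' \<and> k' < i \<and> i < n \<and> r' = 0)"
    using b ii unfolding Pset_iff by simp
  have "k = k' \<and> r = r'"
  proof -
    { assume h: "1 \<le> i \<and> i < n \<and> k = 0 \<and> r = n-i"
      have ?thesis using B
      proof (elim disjE)
        assume "1 \<le> i \<and> i < n \<and> k' = 0 \<and> r' = n-i" then show ?thesis using h by simp
      next
        assume h2: "2 \<le> i \<and> i < n \<and> k' = 1 \<and> r' < n-i"
        then show ?thesis using e1(2) h vA[of i] vBn[of i r'] by simp
      next
        assume h2: "2 \<le> k' \<and> k' < i \<and> i < n \<and> r' = 0"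
        then show ?thesis using e1(2) h vA[of i] vCn[of k' i] by simp
      qed }
    moreover
    { assume h: "2 \<le> i \<and> i < n \<and> k = 1 \<and> r < n-i"
      have ?thesis using B
      proof (elim disjE)
        assume h2: "1 \<le> i \<and> i < n \<and> k' = 0 \<and> r' = n-i"
        then show ?thesis using e1(2) h vA[of i] vBn[of i r] by simp
      next
        assume h2: "2 \<le> i \<and> i < n \<and> k' = 1 \<and> r' < n-i"
        then show ?thesis using e1(1) h vB1[of i r] vB1[of i r'] by simp
      next
        assume h2: "2 \<le> k' \<and> k' < i \<and> i < n \<and> r' = 0"
        then show ?thesis using e1(1) h vB1[of i r] vC1[of k' i] by simp
      qed }
    moreover
    { assume h: "2 \<le> k \<and> k < i \<and> i < n \<and> r = 0"
      have ?thesis using B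
      proof (elim disjE)
        assume h2: "1 \<le> i \<and> i < n \<and> k' = 0 \<and> r' = n-i"
        then show ?thesis using e1(2) h vA[of i] vCn[of k i] by simp
      next
        assume h2: "2 \<le> i \<and> i < n \<and> k' = 1 \<and> r' < n-i"
        then show ?thesis using e1(1) h vB1[of i r'] vC1[of k i] by simp
      next
        assume h2: "2 \<le> k' \<and> k' < i \<and> i < n \<and> r' = 0"
        show ?thesis
        proof (cases k k' rule: linorder_cases)
          case less
          then show ?thesis using e1(3) h h2 vCk[of k i] vCx[of k' i k] by simp
        next
          case equal then show ?thesis using h h2 by simp
        next
          case greater
          then show ?thesis using e1(4) h h2 vCk[of k' i] vCx[of k i k'] by simp
        qed
      qed }
    ultimately show ?thesis using A by blast
  qed
  then show "i = i' \<and> k = k' \<and> r = r'" using ii by simp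
qed

lemma inj_Phi: "inj_on (\<lambda>(i,k,r). Phi n i k r) (Pset n)"
proof (rule inj_onI)
  fix x y assume x: "x \<in> Pset n" and y: "y \<in> Pset n" and e: "(\<lambda>(i,k,r). Phi n i k r) x = (\<lambda>(i,k,r). Phi n i k r) y"
  obtain i k r where xx: "x = (i,k,r)" by (cases x) auto
  obtain i' k' r' where yy: "y = (i',k',r')" by (cases y) auto
  show "x = y" using inj_Phi_aux[of i k r n i' k' r'] x y e xx yy by simp
qed



definition goodset :: "nat \<Rightarrow> (nat \<Rightarrow> nat) set" where
  "goodset n = {p \<in> perms n. avoids n p [1,2,4,3] \<and> avoids n p [2,1,4,3] \<and> avoids n p [3,2,1]}"

lemma goodset_FO: "goodset n = {p. p permutes {1..n} \<and> FO n p}"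
  unfolding goodset_def perms_def using good_FO by blast

lemma perms_fix: fixes n :: nat and p :: "nat \<Rightarrow> nat" assumes "1 \<le> n" shows "(p permutes {1..n} \<and> p n = n) \<longleftrightarrow> p permutes {1..n-1}"
proof
  assume h: "p permutes {1..n} \<and> p n = n"
  show "p permutes {1..n-1}"
  proof (rule permutes_superset[of p "{1..n}"])
    show "p permutes {1..n}" using h by simp
    fix x assume "x \<in> {1..n} - {1..n-1}"
    then have "x = n" by auto
    then show "p x = x" using h by simp
  qed
next
  assume h: "p permutes {1..n-1}"
  have "p permutes {1..n}" by (rule permutes_subset[OF h]) auto
  moreover have "p n = n" using permutes_not_in[OF h] assms by auto
  ultimately show "p permutes {1..n} \<and> p n = n" by simp
qed

lemma FO_fix:
  assumes pp: "p permutes {1..n}" and pn: "p n = n"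
  shows "FO n p \<longleftrightarrow> FO (n-1) p"
proof
  assume "FO n p" then show "FO (n-1) p" unfolding FO_def
    by (meson diff_le_self le_trans)
next
  assume f: "FO (n-1) p"
  note rng = perm_facts(1)[OF pp]
  have A: False if h: "1\<le>a" "a<b" "b<c" "c\<le>n" "p c < p b" "p b < p a" for a b c
  proof (cases "c = n")
    case True then show ?thesis using rng[of b] h pn by auto
  next
    case False then have "c \<le> n - 1" using h by auto
    then show ?thesis using f h unfolding FO_def by blast
  qed
  have B: False if h: "1\<le>a" "a<b" "b<c" "c<d" "d\<le>n" "p d < p c" and
    h2: "(p a < p b \<and> p b < p d) \<or> (p b < p a \<and> p a < p d)" for a b c d
  proof (cases "d = n")
    case True then show ?thesis using rng[of c] h pn by auto
  next
    case False then have "d \<le> n - 1" using h by auto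
    then show ?thesis using f h h2 unfolding FO_def by blast
  qed
  show "FO n p" unfolding FO_def using A B by blast
qed

lemma goodset_split:
  assumes n: "1 \<le> n"
  shows "goodset n = goodset (n-1) \<union> (\<lambda>(i,k,r). Phi n i k r) ` Pset n"
proof
  show "goodset n \<subseteq> goodset (n-1) \<union> (\<lambda>(i,k,r). Phi n i k r) ` Pset n"
  proof
    fix p assume "p \<in> goodset n"
    then have pp: "p permutes {1..n}" and f: "FO n p" unfolding goodset_FO by auto
    show "p \<in> goodset (n-1) \<union> (\<lambda>(i,k,r). Phi n i k r) ` Pset n"
    proof (cases "p n = n")
      case True
      then have "p permutes {1..n-1}" "FO (n-1) p" using perms_fix[OF n] pp FO_fix[OF pp] f by auto
      then show ?thesis unfolding goodset_FO by auto
    next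
      case False
      obtain i where s: "strc n p i" using FO_strc[OF pp f False n] by blast
      obtain k r where kr: "(k = 0 \<and> r = n-i \<or> k = 1 \<and> 2 \<le> i \<and> r < n-i \<or> 2 \<le> k \<and> k < i \<and> r = 0)"
        and pe: "p = Phi n i k r" using strc_Phi[OF pp s] by blast
      have "1 \<le> i" "i < n" using s unfolding strc_def by blast+
      then have "(i,k,r) \<in> Pset n" using kr unfolding Pset_iff by auto
      then show ?thesis using pe by force
    qed
  qed
next
  show "goodset (n-1) \<union> (\<lambda>(i,k,r). Phi n i k r) ` Pset n \<subseteq> goodset n"
  proof
    fix p assume "p \<in> goodset (n-1) \<union> (\<lambda>(i,k,r). Phi n i k r) ` Pset n"
    then consider "p \<in> goodset (n-1)" | "p \<in> (\<lambda>(i,k,r). Phi n i k r) ` Pset n" by blast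
    then show "p \<in> goodset n"
    proof cases
      case 1
      then have h: "p permutes {1..n-1}" "FO (n-1) p" unfolding goodset_FO by auto
      then have "p permutes {1..n}" "p n = n" using perms_fix[OF n] by auto
      then show ?thesis using FO_fix h unfolding goodset_FO by auto
    next
      case 2
      then obtain i k r where t: "(i,k,r) \<in> Pset n" and pe: "p = Phi n i k r" by auto
      have "Phi n i k r permutes {1..n} \<and> strc n (Phi n i k r) i" using Phi_props[OF t] .
      then have "FO n p" "p permutes {1..n}" using strc_FO pe by auto
      then show ?thesis unfolding goodset_FO by auto
    qed
  qed
qed

lemma goodset_disj:
  assumes n: "1 \<le> n"
  shows "goodset (n-1) \<inter> (\<lambda>(i,k,r). Phi n i k r) ` Pset n = {}"
proof -
  { fix p assume a: "p \<in> goodset (n-1)" and b: "p \<in> (\<lambda>(i,k,r). Phi n i k r) ` Pset n"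
    have "p n = n" using a perms_fix[OF n] unfolding goodset_FO by auto
    obtain i k r where t: "(i,k,r) \<in> Pset n" and pe: "p = Phi n i k r" using b by auto
    have pr: "p permutes {1..n}" "strc n p i" using Phi_props[OF t] pe by auto
    have "i < n" "p i = n" using pr(2) unfolding strc_def by blast+
    then have "p i = p n" using \<open>p n = n\<close> by simp
    then have "i = n" using permutes_inj[OF pr(1)] by (auto simp: inj_def)
    then have False using \<open>i < n\<close> by simp }
  then show ?thesis by blast
qed

lemma finite_goodset: "finite (goodset n)"
proof -
  have "goodset n \<subseteq> {p. p permutes {1..n}}" unfolding goodset_FO by auto
  then show ?thesis using finite_permutations[of "{1..n}"] finite_subset by auto
qed

lemma card_rec: "1 \<le> n \<Longrightarrow> card (goodset n) = card (goodset (n-1)) + card (Pset n)"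
proof -
  assume n: "1 \<le> n"
  have fP: "finite (Pset n)" unfolding Pset_def PA_def PB_def PC_def by auto
  have "card (goodset n) = card (goodset (n-1)) + card ((\<lambda>(i,k,r). Phi n i k r) ` Pset n)"
    unfolding goodset_split[OF n] using goodset_disj[OF n] finite_goodset fP
    by (subst card_Un_disjoint) auto
  also have "card ((\<lambda>(i,k,r). Phi n i k r) ` Pset n) = card (Pset n)" using card_image[OF inj_Phi] .
  finally show ?thesis .
qed

lemma goodset0: "card (goodset 0) = 1"
proof -
  have "goodset 0 = {id}" unfolding goodset_FO FO_def by auto
  then show ?thesis by simp
qed

lemma two_choose2: "2 * (m choose 2) = m * (m - 1)"
  by (induct m) (auto simp: choose_two)

lemma main: "1 \<le> n \<Longrightarrow> card (goodset n) = n + 2 * (n choose 3)"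
proof (induction n rule: nat_induct_at_least)
  case base
  have "card (Pset 1) = 0" using card_Pset[of 1] by simp
  then show ?case using card_rec[of 1] goodset0 by simp
next
  case (Suc m)
  have c: "card (Pset (Suc m)) = m + (m - 1) * (m - 1)" using card_Pset2[of "Suc m"] Suc.hyps by simp
  have b: "Suc m choose 3 = (m choose 2) + (m choose 3)"
    by (simp add: numeral_3_eq_3 numeral_2_eq_2)
  have t: "2 * (m choose 2) = m * (m - 1)" by (rule two_choose2)
  obtain j where j: "m = Suc j" using Suc.hyps by (cases m) auto
  have "card (goodset (Suc m)) = m + 2 * (m choose 3) + (m + (m - 1) * (m - 1))"
    using card_rec[of "Suc m"] Suc.IH c by simp
  also have "\<dots> = Suc m + 2 * (Suc m choose 3)" unfolding b using t j by (simp add: algebra_simps)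
  finally show ?case .
qed

theorem corollary3p10:
  fixes n :: nat
  assumes "n \<ge> 1"
  shows "card {p \<in> perms n. avoids n p [1,2,4,3] \<and> avoids n p [2,1,4,3] \<and> avoids n p [3,2,1]}
           = n + 2 * (n choose 3)"
  using main[OF assms] unfolding goodset_def .

end
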